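(* For every $n\in\mathbb{N}_0$ and every $l\in\{0,\ldots,n\}$ the polynomials $A_n^l$ defined in the context satisfy $$\mathbf{x}\,A_{n}^{l}=\frac{1}{2(n+1)}\Big[(2n+3)\,A_{n+1}^{l}-(2l+1)\,\widehat{A_{n+1}^{l}}\Big]$$ and $$A_{n+1}^{l}=\frac{n+1}{2(n-l+1)(n+l+2)}\Big[(2n+3)\,\mathbf{x}\,A_{n}^{l}+(2l+1)\,\overline{\mathbf{x}}\,\widehat{A_{n}^{l}}\Big],$$ where products are quaternion products.
   Context: $\mathbb{H}$: real quaternions with basis $\mathbf{e}_0=1,\mathbf{e}_1,\mathbf{e}_2,\mathbf{e}_3$, $\mathbf{e}_i\mathbf{e}_j+\mathbf{e}_j\mathbf{e}_i=-2\delta_{ij}$ ($i,j=1,2,3$), $\mathbf{e}_1\mathbf{e}_2=\mathbf{e}_3$. A point $(x_0,x_1,x_2)\in\mathbb{R}^3$ is identified with $\mathbf{x}=x_0+x_1\mathbf{e}_1+x_2\mathbf{e}_2$, and $\overline{\mathbf{x}}=x_0-x_1\mathbf{e}_1-x_2\mathbf{e}_2$. For $g=\sum_{i=0}^3 g^i\mathbf{e}_i$ (real $g^i$) put $\widehat{g}:=g^0-g^1\mathbf{e}_1-g^2\mathbf{e}_2+g^3\mathbf{e}_3$. Spherical coordinates: $x_0=r\cos\theta$, $x_1=r\sin\theta\cos\varphi$, $x_2=r\sin\theta\sin\varphi$. Let $P_k$ be the Legendre polynomials and $P_k^m(t)=(1-t^2)^{m/2}\frac{d^m}{dt^m}P_k(t)$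 the associated Legendre functions (no Condon–Shortley phase; $P_k^m=0$ for $m>k$). For $n\in\mathbb{N}_0$, $0\le m\le n+1$ put $$\mathcal{A}^{m,n}(\theta)=\tfrac12\Big(\sin^2\theta\,\tfrac{d}{dt}[P_{n+1}^m(t)]_{t=\cos\theta}+(n+1)\cos\theta\,P_{n+1}^m(\cos\theta)\Big).$$ For $n\in\mathbb{N}_0$, $l=0,\ldots,n$ define $$A_n^l(\mathbf{x})=\frac{2^{l+1}n!\,r^n}{(n+l+2)!}\Big[(n+l+2)\mathcal{A}^{l,n}(\theta)\big(\cos l\varphi-\sin l\varphi\,\mathbf{e}_3\big)+\mathcal{A}^{l+1,n}(\theta)\big(\cos((l+1)\varphi)\,\mathbf{e}_1+\sin((l+1)\varphi)\,\mathbf{e}_2\big)\Big];$$ each $A_n^l$ is a homogeneous monogenic ($\bar\partial A_n^l=0$, $\bar\partial=\partial_{x_0}+\mathbf{e}_1\partial_{x_1}+\mathbf{e}_2\partial_{x_2}$ acting from the left) polynomial of degree $n$ in $x_0,x_1,x_2$ (e.g. $A_0^0=1$, $A_1^1=x_1-x_2\mathbf{e}_3$). *)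

theory Defs
  imports "HOL-Analysis.Analysis" "HOL-Computational_Algebra.Polynomial"
begin

text \<open>A quaternion g = g0 + g1 e1 + g2 e2 + g3 e3, with e1 e2 = e3 and
  e_i e_j + e_j e_i = -2 delta_ij (Hamilton's convention i = e1, j = e2, k = e3).\<close>

datatype quat = Quat (qc0: real) (qc1: real) (qc2: real) (qc3: real)

definition qadd :: "quat \<Rightarrow> quat \<Rightarrow> quat" where
  "qadd p q = Quat (qc0 p + qc0 q) (qc1 p + qc1 q) (qc2 p + qc2 q) (qc3 p + qc3 q)"

definition qsub :: "quat \<Rightarrow> quat \<Rightarrow> quat" where
  "qsub p q = Quat (qc0 p - qc0 q) (qc1 p - qc1 q) (qc2 p - qc2 q) (qc3 p - qc3 q)"

definition qscale :: "real \<Rightarrow> quat \<Rightarrow> quat" where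
  "qscale c q = Quat (c * qc0 q) (c * qc1 q) (c * qc2 q) (c * qc3 q)"

text \<open>Quaternion product (e1 e2 = e3, e2 e3 = e1, e3 e1 = e2, e_i^2 = -1).\<close>
definition qmul :: "quat \<Rightarrow> quat \<Rightarrow> quat" where
  "qmul p q = Quat
     (qc0 p * qc0 q - qc1 p * qc1 q - qc2 p * qc2 q - qc3 p * qc3 q)
     (qc0 p * qc1 q + qc1 p * qc0 q + qc2 p * qc3 q - qc3 p * qc2 q)
     (qc0 p * qc2 q - qc1 p * qc3 q + qc2 p * qc0 q + qc3 p * qc1 q)
     (qc0 p * qc3 q + qc1 p * qc2 q - qc2 p * qc1 q + qc3 p * qc0 q)"

definition qhat :: "quat \<Rightarrow> quat" where
  "qhat g = Quat (qc0 g) (- qc1 g) (- qc2 g) (qc3 g)"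

definition qpoint :: "real \<Rightarrow> real \<Rightarrow> real \<Rightarrow> quat" where
  "qpoint x0 x1 x2 = Quat x0 x1 x2 0"

definition qpoint_bar :: "real \<Rightarrow> real \<Rightarrow> real \<Rightarrow> quat" where
  "qpoint_bar x0 x1 x2 = Quat x0 (- x1) (- x2) 0"

definition legendre_poly :: "nat \<Rightarrow> real poly" where
  "legendre_poly k = smult (1 / (2 ^ k * fact k)) ((pderiv ^^ k) ([:-1, 0, 1:] ^ k))"

text \<open>P_k^m(t) = (1-t^2)^(m/2) (d/dt)^m P_k(t), no Condon--Shortley phase.\<close>
definition assoc_legendre :: "nat \<Rightarrow> nat \<Rightarrow> real \<Rightarrow> real" where
  "assoc_legendre k m t = sqrt (1 - t\<^sup>2) ^ m * poly ((pderiv ^^ m) (legendre_poly k)) t"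

definition calA :: "nat \<Rightarrow> nat \<Rightarrow> real \<Rightarrow> real" where
  "calA m n \<theta> = (1/2) * ((sin \<theta>)\<^sup>2 * deriv (assoc_legendre (n + 1) m) (cos \<theta>)
                      + real (n + 1) * cos \<theta> * assoc_legendre (n + 1) m (cos \<theta>))"

text \<open>A_n^l at the point with spherical coordinates (r, theta, phi).\<close>
definition A_sph :: "nat \<Rightarrow> nat \<Rightarrow> real \<Rightarrow> real \<Rightarrow> real \<Rightarrow> quat" where
  "A_sph n l r \<theta> \<phi> =
     (let c = 2 ^ (l + 1) * fact n * r ^ n / fact (n + l + 2);
          a = real (n + l + 2) * calA l n \<theta>;
          b = calA (l + 1) n \<theta>
      in Quat (c * a * cos (real l * \<phi>))
              (c * b * cos (real (l + 1) * \<phi>))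
              (c * b * sin (real (l + 1) * \<phi>))
              (- (c * a * sin (real l * \<phi>))))"

end

theory Submission
  imports Defs
begin

abbreviation "D \<equiv> (pderiv :: real poly \<Rightarrow> real poly)"
definition XX :: "real poly" where "XX = [:0,1:]"
definition QQ :: "real poly" where "QQ = [:-1,0,1:]"

lemma funpow_pderiv_Suc: "(D ^^ Suc m) f = (D ^^ m) (D f)"
  by (simp add: funpow_swap1)

lemma Dn_smult: "(D ^^ m) (smult c f) = smult c ((D ^^ m) f)"
  by (induction m) (auto simp: pderiv_smult)

lemma Dn_add: "(D ^^ m) (f + g) = (D ^^ m) f + (D ^^ m) g"
  by (induction m) (auto simp: pderiv_add)

lemma pderiv_X: "D XX = 1"
  by (simp add: pderiv_pCons XX_def)

lemma pderiv_q: "D QQ = 2 * XX"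
  by (simp add: pderiv_pCons XX_def QQ_def numeral_poly)

lemma leib_X: "(D ^^ Suc j) (XX * f) = XX * (D ^^ Suc j) f + of_nat (Suc j) * ((D ^^ j) f)"
proof (induction j)
  case 0 then show ?case by (simp add: pderiv_mult pderiv_X)
next
  case (Suc j)
  have "(D ^^ Suc (Suc j)) (XX * f) = D ((D ^^ Suc j) (XX * f))" by simp
  also have "\<dots> = D (XX * (D ^^ Suc j) f + of_nat (Suc j) * ((D ^^ j) f))" using Suc by simp
  also have "\<dots> = XX * (D ^^ Suc (Suc j)) f + of_nat (Suc (Suc j)) * ((D ^^ Suc j) f)"
    by (simp add: pderiv_add pderiv_mult pderiv_smult pderiv_X algebra_simps of_nat_mult)
  finally show ?case .
qed

lemma leib_q: "(D ^^ Suc (Suc j)) (QQ * f) = QQ * (D ^^ Suc (Suc j)) f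
   + of_nat (2 * Suc (Suc j)) * (XX * (D ^^ Suc j) f) + of_nat (Suc (Suc j) * Suc j) * ((D ^^ j) f)"
proof (induction j)
  case 0 then show ?case by (simp add: pderiv_mult pderiv_q pderiv_add pderiv_smult pderiv_X algebra_simps of_nat_mult)
next
  case (Suc j)
  have "(D ^^ Suc (Suc (Suc j))) (QQ * f) = D ((D ^^ Suc (Suc j)) (QQ * f))" by simp
  also have "\<dots> = D (QQ * (D ^^ Suc (Suc j)) f
   + of_nat (2 * Suc (Suc j)) * (XX * (D ^^ Suc j) f) + of_nat (Suc (Suc j) * Suc j) * ((D ^^ j) f))" using Suc by simp
  also have "\<dots> = QQ * (D ^^ Suc (Suc (Suc j))) f
   + of_nat (2 * Suc (Suc (Suc j))) * (XX * (D ^^ Suc (Suc j)) f) + of_nat (Suc (Suc (Suc j)) * Suc (Suc j)) * ((D ^^ Suc j) f)"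
    by (simp add: pderiv_add pderiv_mult pderiv_smult pderiv_X pderiv_q algebra_simps)
  finally show ?case .
qed

lemma smult_ofnat: "smult (of_nat n) p = (of_nat n * p :: real poly)"
  by (simp add: of_nat_poly)

lemma Dn_ofnat: "(D ^^ m) (of_nat c * f) = of_nat c * ((D ^^ m) f)"
  using Dn_smult[of m "of_nat c" f] by (simp add: smult_ofnat)

lemma Du: "D (QQ ^ Suc k) = of_nat (2 * Suc k) * (XX * QQ ^ k)"
  unfolding pderiv_power_Suc pderiv_q smult_ofnat by (simp only: of_nat_mult) (simp add: algebra_simps)

definition RR :: "nat \<Rightarrow> real poly" where "RR k = (D ^^ k) (QQ ^ k)"

lemma RR_rec: "D (RR (Suc k)) = of_nat (2 * Suc k) * (XX * D (RR k) + of_nat (Suc k) * RR k)"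
proof -
  have "D (RR (Suc k)) = (D ^^ Suc k) (D (QQ ^ Suc k))"
    unfolding RR_def by (simp only: funpow.simps(2) o_apply funpow_swap1)
  also have "\<dots> = of_nat (2 * Suc k) * (XX * (D ^^ Suc k) (QQ ^ k) + of_nat (Suc k) * RR k)"
    unfolding Du Dn_ofnat leib_X RR_def ..
  also have "(D ^^ Suc k) (QQ ^ k) = D (RR k)" unfolding RR_def by simp
  finally show ?thesis .
qed

lemma QDu: "QQ * D (QQ ^ k) = of_nat (2 * k) * (XX * QQ ^ k)"
proof (cases k)
  case 0 then show ?thesis by simp
next
  case (Suc j)
  then show ?thesis unfolding Suc Du by (simp only: power_Suc) (simp add: algebra_simps)
qed

lemma RR_ode: "QQ * D (D (RR k)) + 2 * (XX * D (RR k)) = of_nat (k * (k + 1)) * RR k"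
proof (cases k)
  case 0 then show ?thesis by (simp add: RR_def)
next
  case (Suc j)
  have e: "(D ^^ Suc (Suc j)) (QQ * D (QQ ^ k)) = (D ^^ Suc (Suc j)) (of_nat (2 * k) * (XX * QQ ^ k))"
    by (simp only: QDu)
  have a: "(D ^^ Suc (Suc j)) (D (QQ ^ k)) = D (D (RR k))" unfolding RR_def Suc
    by (simp only: funpow.simps(2) o_apply funpow_swap1)
  have b: "(D ^^ Suc j) (D (QQ ^ k)) = D (RR k)" unfolding RR_def Suc
    by (simp only: funpow.simps(2) o_apply funpow_swap1)
  have c: "(D ^^ j) (D (QQ ^ k)) = RR k" unfolding RR_def Suc
    by (simp only: funpow.simps(2) o_apply funpow_swap1)
  have d: "(D ^^ Suc j) (QQ ^ k) = RR k" "(D ^^ Suc (Suc j)) (QQ ^ k) = D (RR k)"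
    unfolding RR_def Suc by simp_all
  from e have "QQ * D (D (RR k)) + of_nat (2 * Suc (Suc j)) * (XX * D (RR k)) + of_nat (Suc (Suc j) * Suc j) * RR k
     = of_nat (2 * k) * (XX * D (RR k) + of_nat (Suc (Suc j)) * RR k)"
    unfolding leib_q Dn_ofnat leib_X a b c d .
  then show ?thesis using Suc by (simp add: algebra_simps)
qed

abbreviation "PP \<equiv> legendre_poly"

lemma PP_RR: "PP k = smult (1 / (2 ^ k * fact k)) (RR k)"
  unfolding legendre_poly_def RR_def QQ_def ..

lemma PP_rec: "D (PP (Suc k)) = XX * D (PP k) + of_nat (Suc k) * PP k"
proof -
  have c: "1 / (2 ^ Suc k * fact (Suc k)) * real (2 * Suc k) = (1 / (2 ^ k * fact k) :: real)"
  proof -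
    have e: "(2::real) ^ Suc k * fact (Suc k) = real (2 * Suc k) * (2 ^ k * fact k)" by (simp add: algebra_simps)
    have "real (2 * Suc k) \<noteq> 0" by simp
    then show ?thesis unfolding e by simp
  qed
  have "D (PP (Suc k)) = smult (1 / (2 ^ Suc k * fact (Suc k))) (smult (of_nat (2 * Suc k)) (XX * D (RR k) + of_nat (Suc k) * RR k))"
    unfolding PP_RR pderiv_smult RR_rec smult_ofnat ..
  also have "\<dots> = smult (1 / (2 ^ k * fact k)) (XX * D (RR k) + of_nat (Suc k) * RR k)"
    unfolding smult_smult c by simp
  also have "\<dots> = XX * D (PP k) + of_nat (Suc k) * PP k"
    unfolding PP_RR pderiv_smult smult_add_right mult_smult_right smult_ofnat[symmetric] smult_smult
    by (simp add: mult.commute)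
  finally show ?thesis .
qed

lemma PP_ode: "QQ * D (D (PP k)) + 2 * (XX * D (PP k)) = of_nat (k * (k + 1)) * PP k"
proof -
  have "smult (1 / (2 ^ k * fact k)) (QQ * D (D (RR k)) + 2 * (XX * D (RR k))) = smult (1 / (2 ^ k * fact k)) (of_nat (k * (k + 1)) * RR k)"
    using RR_ode by simp
  then show ?thesis unfolding PP_RR pderiv_smult smult_add_right mult_smult_right by simp
qed

lemma PP_rec_m: "(D ^^ Suc m) (PP (Suc k)) = XX * (D ^^ Suc m) (PP k) + of_nat (m + k + 1) * (D ^^ m) (PP k)"
proof (induction m)
  case 0 then show ?case using PP_rec by simp
next
  case (Suc m)
  have "(D ^^ Suc (Suc m)) (PP (Suc k)) = D ((D ^^ Suc m) (PP (Suc k)))" by simp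
  also have "\<dots> = D (XX * (D ^^ Suc m) (PP k) + of_nat (m + k + 1) * (D ^^ m) (PP k))" using Suc by simp
  also have "\<dots> = XX * (D ^^ Suc (Suc m)) (PP k) + of_nat (Suc m + k + 1) * (D ^^ Suc m) (PP k)"
    by (simp add: pderiv_add pderiv_mult pderiv_X algebra_simps)
  finally show ?case .
qed

lemma PP_ode_m: "QQ * (D ^^ Suc (Suc m)) (PP k) + of_nat (2 * (m + 1)) * (XX * (D ^^ Suc m) (PP k))
   = (of_nat (k * (k + 1)) - of_nat (m * (m + 1))) * (D ^^ m) (PP k)"
proof (induction m)
  case 0 then show ?case using PP_ode by simp
next
  case (Suc m)
  have "D (QQ * (D ^^ Suc (Suc m)) (PP k) + of_nat (2 * (m + 1)) * (XX * (D ^^ Suc m) (PP k)))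
      = D ((of_nat (k * (k + 1)) - of_nat (m * (m + 1))) * (D ^^ m) (PP k))" using Suc by simp
  then have "QQ * (D ^^ Suc (Suc (Suc m))) (PP k) + 2 * XX * (D ^^ Suc (Suc m)) (PP k)
     + of_nat (2 * (m + 1)) * ((D ^^ Suc m) (PP k) + XX * (D ^^ Suc (Suc m)) (PP k))
      = (of_nat (k * (k + 1)) - of_nat (m * (m + 1))) * (D ^^ Suc m) (PP k)"
    by (simp add: pderiv_add pderiv_mult pderiv_X pderiv_q pderiv_diff algebra_simps)
  then show ?case by (simp add: algebra_simps)
qed


lemma sqrt_cos: "0 \<le> \<theta> \<Longrightarrow> \<theta> \<le> pi \<Longrightarrow> sqrt (1 - (cos \<theta>)\<^sup>2) = sin \<theta>"
  by (simp add: sin_squared_eq[symmetric] sin_ge_zero)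

lemma al_eq: "0 \<le> \<theta> \<Longrightarrow> \<theta> \<le> pi \<Longrightarrow>
  assoc_legendre k m (cos \<theta>) = sin \<theta> ^ m * poly ((D ^^ m) (PP k)) (cos \<theta>)"
  unfolding assoc_legendre_def by (simp add: sqrt_cos)

lemma DERIV_al:
  assumes "0 < 1 - x\<^sup>2"
  shows "DERIV (assoc_legendre k m) x :>
     of_nat m * ((inverse (sqrt (1 - x\<^sup>2)) / 2 * (- 2 * x)) * sqrt (1 - x\<^sup>2) ^ (m - Suc 0)) * poly ((D ^^ m) (PP k)) x
     + sqrt (1 - x\<^sup>2) ^ m * poly (D ((D ^^ m) (PP k))) x"
proof -
  have d1: "DERIV (\<lambda>x. 1 - x\<^sup>2) x :> - 2 * x"
    by (auto intro!: derivative_eq_intros)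
  have d2: "DERIV (\<lambda>x. sqrt (1 - x\<^sup>2)) x :> inverse (sqrt (1 - x\<^sup>2)) / 2 * (- 2 * x)"
    using DERIV_chain2[OF DERIV_real_sqrt[OF assms] d1] .
  note d3 = DERIV_power[OF d2, of m]
  note d4 = DERIV_mult[OF d3 poly_DERIV[of "(D ^^ m) (PP k)" x]]
  show ?thesis unfolding assoc_legendre_def[abs_def] using d4 by (simp only: mult.commute[of "poly (D _) x"])
qed

lemma calA_eq:
  assumes "0 \<le> \<theta>" "\<theta> \<le> pi"
  shows "calA m n \<theta> = 1/2 * (sin \<theta> ^ m * ((sin \<theta>)\<^sup>2 * poly (D ((D ^^ m) (PP (n+1)))) (cos \<theta>)
            + (real (n+1) - real m) * cos \<theta> * poly ((D ^^ m) (PP (n+1))) (cos \<theta>)))"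
proof -
  let ?Q = "poly ((D ^^ m) (PP (n+1))) (cos \<theta>)"
  let ?Q1 = "poly (D ((D ^^ m) (PP (n+1)))) (cos \<theta>)"
  have key: "(sin \<theta>)\<^sup>2 * deriv (assoc_legendre (n + 1) m) (cos \<theta>) = sin \<theta> ^ m * (sin \<theta>)\<^sup>2 * ?Q1 - real m * cos \<theta> * sin \<theta> ^ m * ?Q"
  proof (cases "sin \<theta> = 0")
    case True then show ?thesis by (cases m) auto
  next
    case False
    then have s: "sin \<theta> > 0" using sin_ge_zero[OF assms] by linarith
    have pos: "0 < 1 - (cos \<theta>)\<^sup>2" using s by (simp add: sin_squared_eq[symmetric])
    have sq: "sqrt (1 - (cos \<theta>)\<^sup>2) = sin \<theta>" using sqrt_cos[OF assms] .
    have "deriv (assoc_legendre (n + 1) m) (cos \<theta>) =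
       of_nat m * ((inverse (sin \<theta>) / 2 * (- 2 * cos \<theta>)) * sin \<theta> ^ (m - Suc 0)) * ?Q + sin \<theta> ^ m * ?Q1"
      using DERIV_imp_deriv[OF DERIV_al[OF pos, of "n+1" m]] unfolding sq .
    moreover have "real m * sin \<theta> ^ (m - Suc 0) * sin \<theta> = real m * sin \<theta> ^ m"
      by (cases m) auto
    moreover have "inverse (sin \<theta>) / 2 * (- 2 * cos \<theta>) * (sin \<theta>)\<^sup>2 = - cos \<theta> * sin \<theta>"
      using s by (simp add: power2_eq_square field_simps)
    ultimately show ?thesis
    proof -
      assume A: "deriv (assoc_legendre (n + 1) m) (cos \<theta>) =
       of_nat m * ((inverse (sin \<theta>) / 2 * (- 2 * cos \<theta>)) * sin \<theta> ^ (m - Suc 0)) * ?Q + sin \<theta> ^ m * ?Q1"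
        and B: "real m * sin \<theta> ^ (m - Suc 0) * sin \<theta> = real m * sin \<theta> ^ m"
        and C: "inverse (sin \<theta>) / 2 * (- 2 * cos \<theta>) * (sin \<theta>)\<^sup>2 = - cos \<theta> * sin \<theta>"
      have "(sin \<theta>)\<^sup>2 * deriv (assoc_legendre (n + 1) m) (cos \<theta>)
         = (inverse (sin \<theta>) / 2 * (- 2 * cos \<theta>) * (sin \<theta>)\<^sup>2) * (real m * sin \<theta> ^ (m - Suc 0)) * ?Q
           + sin \<theta> ^ m * (sin \<theta>)\<^sup>2 * ?Q1"
        unfolding A by (simp only: of_nat_id distrib_left mult_ac)
      also have "\<dots> = - cos \<theta> * (real m * sin \<theta> ^ (m - Suc 0) * sin \<theta>) * ?Q + sin \<theta> ^ m * (sin \<theta>)\<^sup>2 * ?Q1"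
        unfolding C by (simp only: mult_ac)
      also have "\<dots> = sin \<theta> ^ m * (sin \<theta>)\<^sup>2 * ?Q1 - real m * cos \<theta> * sin \<theta> ^ m * ?Q"
        unfolding B by (simp add: algebra_simps)
      finally show ?thesis .
    qed
  qed
  show ?thesis unfolding calA_def key al_eq[OF assms] by (simp add: algebra_simps)
qed


lemma core_I:
  fixes t f0 f1 f2 g0 g1 g2 N L :: real
  assumes g1: "g1 = t * f1 + (L + N + 2) * f0"
      and g2: "g2 = t * f2 + (L + N + 3) * f1"
      and E2: "(t\<^sup>2 - 1) * f2 + 2 * (L + 1) * t * f1 = ((N+1)*(N+2) - L*(L+1)) * f0"
      and E3: "(t\<^sup>2 - 1) * g2 + 2 * (L + 1) * t * g1 = ((N+2)*(N+3) - L*(L+1)) * g0"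
      and pos: "N + L + 3 \<noteq> 0"
  shows "t * (N + L + 2) * ((1 - t\<^sup>2) * f1 + (N + 1 - L) * t * f0) - (1 - t\<^sup>2) * ((1 - t\<^sup>2) * f2 + (N - L) * t * f1)
        = (N - L + 1) * ((1 - t\<^sup>2) * g1 + (N + 2 - L) * t * g0)"
proof -
  let ?e2 = "(t\<^sup>2 - 1) * f2 + 2 * (L + 1) * t * f1 - ((N+1)*(N+2) - L*(L+1)) * f0"
  let ?e3 = "(t\<^sup>2 - 1) * g2 + 2 * (L + 1) * t * g1 - ((N+2)*(N+3) - L*(L+1)) * g0"
  have z2: "?e2 = 0" using E2 by simp
  have z3: "?e3 = 0" using E3 by simp
  have "(N + L + 3) * ((t * (N + L + 2) * ((1 - t\<^sup>2) * f1 + (N + 1 - L) * t * f0) - (1 - t\<^sup>2) * ((1 - t\<^sup>2) * f2 + (N - L) * t * f1))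
        - (N - L + 1) * ((1 - t\<^sup>2) * g1 + (N + 2 - L) * t * g0))
      = (N - L + 1) * t * ?e3 + ((N + L + 3) * (1 - t\<^sup>2) - (N - L + 1) * t\<^sup>2) * ?e2"
    unfolding g1 g2 by (simp add: algebra_simps power2_eq_square)
  then have "(N + L + 3) * ((t * (N + L + 2) * ((1 - t\<^sup>2) * f1 + (N + 1 - L) * t * f0) - (1 - t\<^sup>2) * ((1 - t\<^sup>2) * f2 + (N - L) * t * f1))
        - (N - L + 1) * ((1 - t\<^sup>2) * g1 + (N + 2 - L) * t * g0)) = 0"
    unfolding z2 z3 by simp
  then show ?thesis using pos by simp
qed

lemma core_II:
  fixes t f0 f1 f2 g0 g1 g2 N L :: real
  assumes g1: "g1 = t * f1 + (L + N + 2) * f0"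
      and g2: "g2 = t * f2 + (L + N + 3) * f1"
      and E2: "(t\<^sup>2 - 1) * f2 + 2 * (L + 1) * t * f1 = ((N+1)*(N+2) - L*(L+1)) * f0"
  shows "(N + L + 3) * (t * ((1 - t\<^sup>2) * f2 + (N - L) * t * f1) + (N + L + 2) * ((1 - t\<^sup>2) * f1 + (N + 1 - L) * t * f0))
        = (N + L + 2) * ((1 - t\<^sup>2) * g2 + (N + 1 - L) * t * g1)"
proof -
  let ?e2 = "(t\<^sup>2 - 1) * f2 + 2 * (L + 1) * t * f1 - ((N+1)*(N+2) - L*(L+1)) * f0"
  have z2: "?e2 = 0" using E2 by simp
  have "(N + L + 3) * (t * ((1 - t\<^sup>2) * f2 + (N - L) * t * f1) + (N + L + 2) * ((1 - t\<^sup>2) * f1 + (N + 1 - L) * t * f0))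
        - (N + L + 2) * ((1 - t\<^sup>2) * g2 + (N + 1 - L) * t * g1) = - t * ?e2"
    unfolding g1 g2 by (simp add: algebra_simps power2_eq_square)
  then show ?thesis unfolding z2 by simp
qed


lemma qshape:
  assumes b: "b = a + \<phi>"
  shows "qmul (qpoint (r * t) (r * s * cos \<phi>) (r * s * sin \<phi>)) (Quat (C * cos a) (B * cos b) (B * sin b) (-(C * sin a)))
     = Quat ((r * t * C - r * s * B) * cos a) ((r * t * B + r * s * C) * cos b) ((r * t * B + r * s * C) * sin b) (-((r * t * C - r * s * B) * sin a))"
proof -
  have h1: "cos \<phi> * cos b + sin \<phi> * sin b = cos a" unfolding b using cos_diff[of "a+\<phi>" \<phi>] by (simp add: mult.commute)
  have h2: "cos \<phi> * cos a - sin \<phi> * sin a = cos b" unfolding b by (simp add: cos_add mult.commute)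
  have h3: "sin \<phi> * cos a + cos \<phi> * sin a = sin b" unfolding b by (simp add: sin_add mult.commute)
  have h4: "cos \<phi> * sin b - sin \<phi> * cos b = sin a" unfolding b using sin_diff[of "a+\<phi>" \<phi>] by (simp add: mult.commute)
  have c0: "r * t * (C * cos a) - r * s * cos \<phi> * (B * cos b) - r * s * sin \<phi> * (B * sin b) - 0 * (-(C * sin a)) = (r * t * C - r * s * B) * cos a"
  proof -
    have "r * t * (C * cos a) - r * s * cos \<phi> * (B * cos b) - r * s * sin \<phi> * (B * sin b) - 0 * (-(C * sin a)) = r * t * C * cos a - r * s * B * (cos \<phi> * cos b + sin \<phi> * sin b)"
      by (simp add: algebra_simps)
    then show ?thesis unfolding h1 by (simp add: algebra_simps)
  qed
  have c1: "r * t * (B * cos b) + r * s * cos \<phi> * (C * cos a) + r * s * sin \<phi> * (-(C * sin a)) - 0 * (B * sin b) = (r * t * B + r * s * C) * cos b"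
  proof -
    have "r * t * (B * cos b) + r * s * cos \<phi> * (C * cos a) + r * s * sin \<phi> * (-(C * sin a)) - 0 * (B * sin b) = r * t * B * cos b + r * s * C * (cos \<phi> * cos a - sin \<phi> * sin a)"
      by (simp add: algebra_simps)
    then show ?thesis unfolding h2 by (simp add: algebra_simps)
  qed
  have c2: "r * t * (B * sin b) - r * s * cos \<phi> * (-(C * sin a)) + r * s * sin \<phi> * (C * cos a) + 0 * (B * cos b) = (r * t * B + r * s * C) * sin b"
  proof -
    have "r * t * (B * sin b) - r * s * cos \<phi> * (-(C * sin a)) + r * s * sin \<phi> * (C * cos a) + 0 * (B * cos b) = r * t * B * sin b + r * s * C * (sin \<phi> * cos a + cos \<phi> * sin a)"
      by (simp add: algebra_simps)
    then show ?thesis unfolding h3 by (simp add: algebra_simps)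
  qed
  have c3: "r * t * (-(C * sin a)) + r * s * cos \<phi> * (B * sin b) - r * s * sin \<phi> * (B * cos b) + 0 * (C * cos a) = -((r * t * C - r * s * B) * sin a)"
  proof -
    have "r * t * (-(C * sin a)) + r * s * cos \<phi> * (B * sin b) - r * s * sin \<phi> * (B * cos b) + 0 * (C * cos a) = - (r * t * C * sin a) + r * s * B * (cos \<phi> * sin b - sin \<phi> * cos b)"
      by (simp add: algebra_simps)
    then show ?thesis unfolding h4 by (simp add: algebra_simps)
  qed
  show ?thesis unfolding qmul_def qpoint_def using c0 c1 c2 c3 by simp
qed

lemma qhat_mul: "qmul (qhat p) (qhat q) = qhat (qmul p q)"
  by (simp add: qmul_def qhat_def)

lemma qhat_point: "qhat (qpoint a b c) = qpoint_bar a b c"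
  by (simp add: qhat_def qpoint_def qpoint_bar_def)

lemma assemble:
  fixes N L cn cn1 an bn an1 bn1 t s r a b \<phi> :: real
  assumes b: "b = a + \<phi>"
    and NL: "0 \<le> L" "L \<le> N"
    and Kc: "r * cn * (N + 1) = cn1 * (N + L + 3)"
    and I: "t * (N + L + 2) * an - s * bn = (N - L + 1) * an1"
    and II: "(N + L + 3) * (t * bn + s * (N + L + 2) * an) = (N + L + 2) * bn1"
  defines "An \<equiv> Quat (cn * ((N + L + 2) * an) * cos a) (cn * bn * cos b) (cn * bn * sin b) (- (cn * ((N + L + 2) * an) * sin a))"
    and "An1 \<equiv> Quat (cn1 * ((N + L + 3) * an1) * cos a) (cn1 * bn1 * cos b) (cn1 * bn1 * sin b) (- (cn1 * ((N + L + 3) * an1) * sin a))"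
    and "x \<equiv> qpoint (r * t) (r * s * cos \<phi>) (r * s * sin \<phi>)"
    and "xbar \<equiv> qpoint_bar (r * t) (r * s * cos \<phi>) (r * s * sin \<phi>)"
  shows "qmul x An = qscale (1 / (2 * (N + 1))) (qsub (qscale (2 * N + 3) An1) (qscale (2 * L + 1) (qhat An1)))
     \<and> An1 = qscale ((N + 1) / (2 * (N - L + 1) * (N + L + 2))) (qadd (qscale (2 * N + 3) (qmul x An)) (qscale (2 * L + 1) (qmul xbar (qhat An))))"
proof -
  define y0 where "y0 = r * cn * (N - L + 1) * an1"
  define y1 where "y1 = r * cn * (N + L + 2) * bn1 / (N + L + 3)"
  have p3: "N + L + 3 > 0" "N + 1 > 0" "N - L + 1 > 0" "N + L + 2 > 0" using NL by auto
  have e0: "r * t * (cn * ((N + L + 2) * an)) - r * s * (cn * bn) = y0"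
  proof -
    have "r * t * (cn * ((N + L + 2) * an)) - r * s * (cn * bn) = r * cn * (t * (N + L + 2) * an - s * bn)" by (simp add: algebra_simps)
    then show ?thesis unfolding I y0_def by (simp add: algebra_simps)
  qed
  have e1: "r * t * (cn * bn) + r * s * (cn * ((N + L + 2) * an)) = y1"
  proof -
    have "r * t * (cn * bn) + r * s * (cn * ((N + L + 2) * an)) = r * cn * ((N + L + 3) * (t * bn + s * (N + L + 2) * an)) / (N + L + 3)"
      using p3 by (simp add: field_simps)
    then show ?thesis unfolding II y1_def by (simp add: algebra_simps)
  qed
  have Y: "qmul x An = Quat (y0 * cos a) (y1 * cos b) (y1 * sin b) (- (y0 * sin a))"
    unfolding x_def An_def qshape[OF b] e0 e1 ..
  have Yb: "qmul xbar (qhat An) = Quat (y0 * cos a) (- (y1 * cos b)) (- (y1 * sin b)) (- (y0 * sin a))"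
    unfolding xbar_def qhat_point[symmetric] qhat_mul x_def[symmetric] Y by (simp add: qhat_def)
  have nz: "2 * (N + 1) \<noteq> 0" "2 * (N - L + 1) * (N + L + 2) \<noteq> 0" "N + L + 3 \<noteq> 0" "N + 1 \<noteq> 0" "N - L + 1 \<noteq> 0" "N + L + 2 \<noteq> 0"
    using p3 by auto
  have cn1: "cn1 = r * cn * (N + 1) / (N + L + 3)" using Kc p3 by (simp add: field_simps)
  have j0: "\<And>ca. y0 * ca = 1 / (2 * (N + 1)) * ((2 * N + 3) * (cn1 * ((N + L + 3) * an1) * ca) - (2 * L + 1) * (cn1 * ((N + L + 3) * an1) * ca))"
  proof -
    fix ca
    have "1 / (2 * (N + 1)) * ((2 * N + 3) * (cn1 * ((N + L + 3) * an1) * ca) - (2 * L + 1) * (cn1 * ((N + L + 3) * an1) * ca))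
       = (N - L + 1) / (N + 1) * (cn1 * (N + L + 3)) * an1 * ca" using nz by (simp add: field_simps)
    also have "\<dots> = (N - L + 1) / (N + 1) * (N + 1) * (r * cn) * an1 * ca" unfolding Kc[symmetric] by (simp add: algebra_simps)
    also have "\<dots> = y0 * ca" unfolding y0_def using nz by simp
    finally show "y0 * ca = 1 / (2 * (N + 1)) * ((2 * N + 3) * (cn1 * ((N + L + 3) * an1) * ca) - (2 * L + 1) * (cn1 * ((N + L + 3) * an1) * ca))" by simp
  qed
  have j1: "\<And>ca. y1 * ca = 1 / (2 * (N + 1)) * ((2 * N + 3) * (cn1 * bn1 * ca) - (2 * L + 1) * (- (cn1 * bn1 * ca)))"
  proof -
    fix ca
    have "1 / (2 * (N + 1)) * ((2 * N + 3) * (cn1 * bn1 * ca) - (2 * L + 1) * (- (cn1 * bn1 * ca)))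
       = (N + L + 2) / (N + 1) * cn1 * bn1 * ca" using nz by (simp add: field_simps)
    also have "\<dots> = (N + L + 2) / (N + 1) * (N + 1) * (r * cn) / (N + L + 3) * bn1 * ca" unfolding cn1 by (simp add: algebra_simps)
    also have "\<dots> = y1 * ca" unfolding y1_def using nz by simp
    finally show "y1 * ca = 1 / (2 * (N + 1)) * ((2 * N + 3) * (cn1 * bn1 * ca) - (2 * L + 1) * (- (cn1 * bn1 * ca)))" by simp
  qed
  have P1: "qmul x An = qscale (1 / (2 * (N + 1))) (qsub (qscale (2 * N + 3) An1) (qscale (2 * L + 1) (qhat An1)))"
    unfolding Y An1_def qscale_def qsub_def qhat_def quat.sel
    using j0[of "cos a"] j0[of "- sin a"] j1[of "cos b"] j1[of "sin b"] by (simp add: algebra_simps)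
  have k0: "\<And>ca. cn1 * ((N + L + 3) * an1) * ca = (N + 1) / (2 * (N - L + 1) * (N + L + 2)) * ((2 * N + 3) * (y0 * ca) + (2 * L + 1) * (y0 * ca))"
  proof -
    fix ca
    have "(N + 1) / (2 * (N - L + 1) * (N + L + 2)) * ((2 * N + 3) * (y0 * ca) + (2 * L + 1) * (y0 * ca))
        = (N + 1) / (2 * (N - L + 1) * (N + L + 2)) * (2 * (N + L + 2)) * (y0 * ca)" by (simp add: algebra_simps)
    also have "\<dots> = (N + 1) / (N - L + 1) * (y0 * ca)" using nz by (simp add: field_simps)
    also have "\<dots> = r * cn * (N + 1) * an1 * ca" unfolding y0_def using nz by (simp add: field_simps)
    also have "\<dots> = cn1 * ((N + L + 3) * an1) * ca" unfolding Kc by (simp add: algebra_simps)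
    finally show "cn1 * ((N + L + 3) * an1) * ca = (N + 1) / (2 * (N - L + 1) * (N + L + 2)) * ((2 * N + 3) * (y0 * ca) + (2 * L + 1) * (y0 * ca))" by simp
  qed
  have k1: "\<And>ca. cn1 * bn1 * ca = (N + 1) / (2 * (N - L + 1) * (N + L + 2)) * ((2 * N + 3) * (y1 * ca) + (2 * L + 1) * (- (y1 * ca)))"
  proof -
    fix ca
    have "(N + 1) / (2 * (N - L + 1) * (N + L + 2)) * ((2 * N + 3) * (y1 * ca) + (2 * L + 1) * (- (y1 * ca)))
        = (N + 1) / (2 * (N - L + 1) * (N + L + 2)) * (2 * (N - L + 1)) * (y1 * ca)" by (simp add: algebra_simps)
    also have "\<dots> = (N + 1) / (N + L + 2) * (y1 * ca)" using nz by (simp add: field_simps)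
    also have "\<dots> = r * cn * (N + 1) * bn1 * ca / (N + L + 3)"
    proof -
      have "y1 * ca = (N + L + 2) * (r * cn * bn1 * ca / (N + L + 3))" unfolding y1_def by (simp add: algebra_simps)
      then have "(N + 1) / (N + L + 2) * (y1 * ca) = (N + 1) * (r * cn * bn1 * ca / (N + L + 3))" using nz(6) by simp
      then show ?thesis by (simp add: algebra_simps)
    qed
    also have "\<dots> = cn1 * bn1 * ca" unfolding Kc using nz by (simp add: field_simps)
    finally show "cn1 * bn1 * ca = (N + 1) / (2 * (N - L + 1) * (N + L + 2)) * ((2 * N + 3) * (y1 * ca) + (2 * L + 1) * (- (y1 * ca)))" by simp
  qed
  have P2: "An1 = qscale ((N + 1) / (2 * (N - L + 1) * (N + L + 2))) (qadd (qscale (2 * N + 3) (qmul x An)) (qscale (2 * L + 1) (qmul xbar (qhat An))))"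
    unfolding Y Yb An1_def qscale_def qadd_def quat.sel
    using k0[of "cos a"] k0[of "- sin a"] k1[of "cos b"] k1[of "sin b"] by (simp add: algebra_simps)
  show ?thesis using P1 P2 by blast
qed


lemma poly_XX: "poly XX t = t" by (simp add: XX_def)
lemma poly_QQ: "poly QQ t = t\<^sup>2 - 1" by (simp add: QQ_def power2_eq_square)

lemma A_sph_form:
  "A_sph n l r \<theta> \<phi> = Quat ((2 ^ (l + 1) * fact n * r ^ n / fact (n + l + 2)) * ((real n + real l + 2) * calA l n \<theta>) * cos (real l * \<phi>))
      ((2 ^ (l + 1) * fact n * r ^ n / fact (n + l + 2)) * calA (l + 1) n \<theta> * cos (real (l + 1) * \<phi>))
      ((2 ^ (l + 1) * fact n * r ^ n / fact (n + l + 2)) * calA (l + 1) n \<theta> * sin (real (l + 1) * \<phi>))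
      (- ((2 ^ (l + 1) * fact n * r ^ n / fact (n + l + 2)) * ((real n + real l + 2) * calA l n \<theta>) * sin (real l * \<phi>)))"
  unfolding A_sph_def Let_def by (simp only: of_nat_add of_nat_numeral)

lemma kc_aux:
  fixes r A Fn Fm M c :: real
  assumes "c \<noteq> 0"
  shows "r * (A * Fn * r ^ n / Fm) * M = (A * (M * Fn) * r ^ (n + 1) / (c * Fm)) * c"
  using assms by (cases "Fm = 0") (simp_all add: field_simps)

theorem mainTheorem2_aux:
  fixes n l :: nat and r \<theta> \<phi> :: real
  assumes "l \<le> n" and "0 \<le> r" and "0 \<le> \<theta>" and "\<theta> \<le> pi"
  defines "x \<equiv> qpoint (r * cos \<theta>) (r * sin \<theta> * cos \<phi>) (r * sin \<theta> * sin \<phi>)"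
      and "xbar \<equiv> qpoint_bar (r * cos \<theta>) (r * sin \<theta> * cos \<phi>) (r * sin \<theta> * sin \<phi>)"
  shows "qmul x (A_sph n l r \<theta> \<phi>) =
           qscale (1 / (2 * (real n + 1)))
             (qsub (qscale (2 * real n + 3) (A_sph (n + 1) l r \<theta> \<phi>))
                   (qscale (2 * real l + 1) (qhat (A_sph (n + 1) l r \<theta> \<phi>))))
       \<and> A_sph (n + 1) l r \<theta> \<phi> =
           qscale ((real n + 1) / (2 * (real n - real l + 1) * (real n + real l + 2)))
             (qadd (qscale (2 * real n + 3) (qmul x (A_sph n l r \<theta> \<phi>)))
                   (qscale (2 * real l + 1) (qmul xbar (qhat (A_sph n l r \<theta> \<phi>)))))"
proof -
  define t where "t = cos \<theta>"
  define s where "s = sin \<theta>"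
  define N where "N = real n"
  define L where "L = real l"
  define F0 where "F0 = poly ((D ^^ l) (PP (n+1))) t"
  define F1 where "F1 = poly (D ((D ^^ l) (PP (n+1)))) t"
  define F2 where "F2 = poly (D (D ((D ^^ l) (PP (n+1))))) t"
  define G0 where "G0 = poly ((D ^^ l) (PP (n+2))) t"
  define G1 where "G1 = poly (D ((D ^^ l) (PP (n+2)))) t"
  define G2 where "G2 = poly (D (D ((D ^^ l) (PP (n+2))))) t"
  have ss: "s\<^sup>2 = 1 - t\<^sup>2" unfolding s_def t_def by (simp add: sin_squared_eq)
  have ca1: "calA l n \<theta> = 1/2 * (s ^ l * (s\<^sup>2 * F1 + (N + 1 - L) * t * F0))"
    unfolding calA_eq[OF assms(3,4)] s_def t_def F0_def F1_def N_def L_def by simp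
  have ca2: "calA (l+1) n \<theta> = 1/2 * (s ^ (l+1) * (s\<^sup>2 * F2 + (N - L) * t * F1))"
    unfolding calA_eq[OF assms(3,4)] s_def t_def F2_def F1_def N_def L_def by simp
  have ca3: "calA l (n+1) \<theta> = 1/2 * (s ^ l * (s\<^sup>2 * G1 + (N + 2 - L) * t * G0))"
    unfolding calA_eq[OF assms(3,4)] s_def t_def G0_def G1_def N_def L_def by (simp add: numeral_2_eq_2)
  have ca4: "calA (l+1) (n+1) \<theta> = 1/2 * (s ^ (l+1) * (s\<^sup>2 * G2 + (N + 1 - L) * t * G1))"
    unfolding calA_eq[OF assms(3,4)] s_def t_def G2_def G1_def N_def L_def by (simp add: numeral_2_eq_2)
  have g1: "G1 = t * F1 + (L + N + 2) * F0"
  proof -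
    have "poly ((D ^^ Suc l) (PP (Suc (n+1)))) t = poly (XX * (D ^^ Suc l) (PP (n+1)) + of_nat (l + (n+1) + 1) * (D ^^ l) (PP (n+1))) t"
      unfolding PP_rec_m ..
    then show ?thesis unfolding G1_def F1_def F0_def N_def L_def by (simp add: poly_XX numeral_2_eq_2 algebra_simps)
  qed
  have g2: "G2 = t * F2 + (L + N + 3) * F1"
  proof -
    have "poly ((D ^^ Suc (Suc l)) (PP (Suc (n+1)))) t = poly (XX * (D ^^ Suc (Suc l)) (PP (n+1)) + of_nat (Suc l + (n+1) + 1) * (D ^^ Suc l) (PP (n+1))) t"
      unfolding PP_rec_m ..
    then show ?thesis unfolding G2_def F2_def F1_def N_def L_def by (simp add: poly_XX numeral_2_eq_2 algebra_simps)
  qed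
  have E2: "(t\<^sup>2 - 1) * F2 + 2 * (L + 1) * t * F1 = ((N+1)*(N+2) - L*(L+1)) * F0"
  proof -
    have "poly (QQ * (D ^^ Suc (Suc l)) (PP (n+1)) + of_nat (2 * (l + 1)) * (XX * (D ^^ Suc l) (PP (n+1)))) t
        = poly ((of_nat ((n+1) * ((n+1) + 1)) - of_nat (l * (l + 1))) * (D ^^ l) (PP (n+1))) t"
      unfolding PP_ode_m ..
    then show ?thesis unfolding F2_def F1_def F0_def N_def L_def by (simp add: poly_XX poly_QQ algebra_simps)
  qed
  have E3: "(t\<^sup>2 - 1) * G2 + 2 * (L + 1) * t * G1 = ((N+2)*(N+3) - L*(L+1)) * G0"
  proof -
    have "poly (QQ * (D ^^ Suc (Suc l)) (PP (n+2)) + of_nat (2 * (l + 1)) * (XX * (D ^^ Suc l) (PP (n+2)))) t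
        = poly ((of_nat ((n+2) * ((n+2) + 1)) - of_nat (l * (l + 1))) * (D ^^ l) (PP (n+2))) t"
      unfolding PP_ode_m ..
    then show ?thesis unfolding G2_def G1_def G0_def N_def L_def by (simp add: poly_XX poly_QQ algebra_simps)
  qed
  have NL: "0 \<le> L" "L \<le> N" using assms(1) unfolding N_def L_def by auto
  note cI = core_I[OF g1 g2 E2 E3]
  note cII = core_II[OF g1 g2 E2]
  have pos: "N + L + 3 \<noteq> 0" using NL by auto
  have I: "t * (N + L + 2) * calA l n \<theta> - s * calA (l+1) n \<theta> = (N - L + 1) * calA l (n+1) \<theta>"
  proof -
    have "t * (N + L + 2) * calA l n \<theta> - s * calA (l+1) n \<theta> = 1/2 * s^l * (t * (N + L + 2) * ((1 - t\<^sup>2) * F1 + (N + 1 - L) * t * F0) - (1 - t\<^sup>2) * ((1 - t\<^sup>2) * F2 + (N - L) * t * F1))"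
      unfolding ca1 ca2 ss[symmetric] by (simp add: power2_eq_square field_simps)
    also have "\<dots> = 1/2 * s^l * ((N - L + 1) * ((1 - t\<^sup>2) * G1 + (N + 2 - L) * t * G0))"
      by (simp only: cI[OF pos])
    also have "\<dots> = (N - L + 1) * calA l (n+1) \<theta>"
      unfolding ca3 ss by (simp add: field_simps)
    finally show ?thesis .
  qed
  have II: "(N + L + 3) * (t * calA (l+1) n \<theta> + s * (N + L + 2) * calA l n \<theta>) = (N + L + 2) * calA (l+1) (n+1) \<theta>"
  proof -
    have "(N + L + 3) * (t * calA (l+1) n \<theta> + s * (N + L + 2) * calA l n \<theta>) = 1/2 * s^(l+1) * ((N + L + 3) * (t * ((1 - t\<^sup>2) * F2 + (N - L) * t * F1) + (N + L + 2) * ((1 - t\<^sup>2) * F1 + (N + 1 - L) * t * F0)))"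
      unfolding ca1 ca2 ss[symmetric] by (simp add: power2_eq_square field_simps)
    also have "\<dots> = 1/2 * s^(l+1) * ((N + L + 2) * ((1 - t\<^sup>2) * G2 + (N + 1 - L) * t * G1))"
      by (simp only: cII)
    also have "\<dots> = (N + L + 2) * calA (l+1) (n+1) \<theta>"
      unfolding ca4 ss by (simp add: field_simps)
    finally show ?thesis .
  qed
  define cn where "cn = 2 ^ (l + 1) * fact n * r ^ n / (fact (n + l + 2) :: real)"
  define cn1 where "cn1 = 2 ^ (l + 1) * fact (n + 1) * r ^ (n + 1) / (fact (n + 1 + l + 2) :: real)"
  have Kc: "r * cn * (N + 1) = cn1 * (N + L + 3)"
  proof -
    have f1: "fact (n + 1 + l + 2) = (N + L + 3) * (fact (n + l + 2) :: real)"
    proof -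
      have "n + 1 + l + 2 = Suc (n + l + 2)" by simp
      then show ?thesis unfolding N_def L_def by (simp add: algebra_simps)
    qed
    have f2: "fact (n + 1) = (N + 1) * (fact n :: real)" unfolding N_def by (simp add: algebra_simps)
    have nz: "(fact (n + l + 2) :: real) \<noteq> 0" "N + L + 3 \<noteq> 0" using pos by auto
    show ?thesis unfolding cn_def cn1_def f1 f2 by (rule kc_aux) (rule nz(2))
  qed
  have b: "real (l + 1) * \<phi> = real l * \<phi> + \<phi>" by (simp add: algebra_simps)
  have An: "A_sph n l r \<theta> \<phi> = Quat (cn * ((N + L + 2) * calA l n \<theta>) * cos (real l * \<phi>))
      (cn * calA (l + 1) n \<theta> * cos (real (l + 1) * \<phi>)) (cn * calA (l + 1) n \<theta> * sin (real (l + 1) * \<phi>))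
      (- (cn * ((N + L + 2) * calA l n \<theta>) * sin (real l * \<phi>)))"
    unfolding A_sph_form cn_def N_def L_def ..
  have An1: "A_sph (n + 1) l r \<theta> \<phi> = Quat (cn1 * ((N + L + 3) * calA l (n + 1) \<theta>) * cos (real l * \<phi>))
      (cn1 * calA (l + 1) (n + 1) \<theta> * cos (real (l + 1) * \<phi>)) (cn1 * calA (l + 1) (n + 1) \<theta> * sin (real (l + 1) * \<phi>))
      (- (cn1 * ((N + L + 3) * calA l (n + 1) \<theta>) * sin (real l * \<phi>)))"
  proof -
    have "real (n + 1) + real l + 2 = N + L + 3" unfolding N_def L_def by simp
    then show ?thesis unfolding A_sph_form[of "n+1"] cn1_def by (simp only:)
  qed
  note M = assemble[OF b NL Kc I II]
  show ?thesis unfolding An An1 x_def xbar_def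
    using M unfolding t_def s_def N_def L_def .
qed


theorem mainTheorem2:
  fixes n l :: nat and r \<theta> \<phi> :: real
  assumes "l \<le> n" and "0 \<le> r" and "0 \<le> \<theta>" and "\<theta> \<le> pi"
  defines "x \<equiv> qpoint (r * cos \<theta>) (r * sin \<theta> * cos \<phi>) (r * sin \<theta> * sin \<phi>)"
      and "xbar \<equiv> qpoint_bar (r * cos \<theta>) (r * sin \<theta> * cos \<phi>) (r * sin \<theta> * sin \<phi>)"
  shows "qmul x (A_sph n l r \<theta> \<phi>) =
           qscale (1 / (2 * (real n + 1)))
             (qsub (qscale (2 * real n + 3) (A_sph (n + 1) l r \<theta> \<phi>))
                   (qscale (2 * real l + 1) (qhat (A_sph (n + 1) l r \<theta> \<phi>))))
       \<and> A_sph (n + 1) l r \<theta> \<phi> =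
           qscale ((real n + 1) / (2 * (real n - real l + 1) * (real n + real l + 2)))
             (qadd (qscale (2 * real n + 3) (qmul x (A_sph n l r \<theta> \<phi>)))
                   (qscale (2 * real l + 1) (qmul xbar (qhat (A_sph n l r \<theta> \<phi>)))))"
  unfolding x_def xbar_def by (rule mainTheorem2_aux[OF assms(1-4)])

end
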